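(* Let $E$ be a finite set and $p$ the transition matrix of an irreducible time-homogeneous Markov chain on $E$ admitting a reversible probability measure $\mu$ (i.e. $p(x,y)\mu(x)=p(y,x)\mu(y)$ for all $x,y$). Let $d$ be the graph distance on $E$ for the graph in which $x,y$ are joined by an edge iff $p(x,y)>0$. Let $L=p-I$ and let $0=\lambda^{(0)}\leq\lambda^{(1)}\leq\cdots$ be the eigenvalues of the symmetric nonnegative operator $-L$ on $L^2(\mu)$, in increasing order counted with multiplicity. Then for any $k\geq1$ and all sets $A_1,\ldots,A_k\subset E$ with $\min_{i\neq j}d(A_i,A_j)\geq 1$ and $(\mu(A_1),\ldots,\mu(A_k))\in\Delta_k$, the set $B=A_1\cup\cdots\cup A_k$ satisfies \[ \mu(B_n)\geq 1-(1-\mu(B))\left(1+\lambda^{(k)}\right)^{-n} \] for all integers $1\leq n\leq\frac12\min_{i\neq j}d(A_i,A_j)$.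
   Context: For $A,B\subset E$, $d(A,B)=\min\{d(x,y):x\in A,y\in B\}$. For $B\subset E$ and an integer $n\geq1$, $B_n=\{x\in E: d(x,B)\leq n\}$ (the graph $n$-neighbourhood of $B$). For $k\geq1$, $\Delta_k$ is the set of $(a_1,\ldots,a_k)\in[0,1]^k$ with $\sum_{j=1}^k a_j\leq1$ and $a_i+\sum_{j=1}^k a_j\geq1$ for every $i$. *)

theory Defs
  imports "HOL-Analysis.Analysis"
begin

text \<open>State space E is the finite type 'n; functions on E are vectors real^'n,
  the transition matrix is P :: real^'n^'n with P$x$y = p(x,y).\<close>

definition stochastic :: "real^'n^'n \<Rightarrow> bool" where
  "stochastic P \<longleftrightarrow> (\<forall>x y. 0 \<le> P$x$y) \<and> (\<forall>x. (\<Sum>y\<in>UNIV. P$x$y) = 1)"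

definition edges :: "real^'n^'n \<Rightarrow> ('n \<times> 'n) set" where
  "edges P = {(x, y). P$x$y > 0}"

definition irreducible :: "real^'n^'n \<Rightarrow> bool" where
  "irreducible P \<longleftrightarrow> (\<forall>x y. (x, y) \<in> (edges P)\<^sup>+)"

definition reversible_prob :: "real^'n^'n \<Rightarrow> ('n \<Rightarrow> real) \<Rightarrow> bool" where
  "reversible_prob P mu \<longleftrightarrow> (\<forall>x. 0 \<le> mu x) \<and> (\<Sum>x\<in>UNIV. mu x) = 1
     \<and> (\<forall>x y. P$x$y * mu x = P$y$x * mu y)"

definition gdist :: "real^'n^'n \<Rightarrow> 'n \<Rightarrow> 'n \<Rightarrow> nat" where
  "gdist P x y = (LEAST n. (x, y) \<in> (edges P) ^^ n)"

text \<open>Set distance d(A,B) = min over x in A, y in B (infinity if a set is empty).\<close>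
definition set_dist :: "real^'n^'n \<Rightarrow> 'n set \<Rightarrow> 'n set \<Rightarrow> enat" where
  "set_dist P A B = (INF x\<in>A. INF y\<in>B. enat (gdist P x y))"

definition nbhd :: "real^'n^'n \<Rightarrow> 'n set \<Rightarrow> nat \<Rightarrow> 'n set" where
  "nbhd P B n = {x. set_dist P {x} B \<le> enat n}"

definition meas :: "('n \<Rightarrow> real) \<Rightarrow> 'n set \<Rightarrow> real" where
  "meas mu A = (\<Sum>x\<in>A. mu x)"

text \<open>Eigenvalues of -L = I - p, and their multiplicities (eigenspace dimensions;
  -L is self-adjoint on L^2(mu), so geometric = algebraic multiplicity).\<close>
definition eigenspace_negL :: "real^'n^'n \<Rightarrow> real \<Rightarrow> (real^'n) set" where
  "eigenspace_negL P l = {f. (mat 1 - P) *v f = l *\<^sub>R f}"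

definition eigenvalues_negL :: "real^'n^'n \<Rightarrow> real set" where
  "eigenvalues_negL P = {l. \<exists>f. f \<noteq> 0 \<and> (mat 1 - P) *v f = l *\<^sub>R f}"

text \<open>Increasing list of eigenvalues counted with multiplicity; lambda^(k) is entry k (0-based,
  so entry 0 is lambda^(0) = 0).\<close>
definition eigen_list :: "real^'n^'n \<Rightarrow> real list" where
  "eigen_list P = sort (concat (map (\<lambda>l. replicate (dim (eigenspace_negL P l)) l)
                                   (sorted_list_of_set (eigenvalues_negL P))))"

definition lam :: "real^'n^'n \<Rightarrow> nat \<Rightarrow> real" where
  "lam P k = eigen_list P ! k"

definition in_Delta :: "nat \<Rightarrow> (nat \<Rightarrow> real) \<Rightarrow> bool" where
  "in_Delta k a \<longleftrightarrow> (\<forall>i\<in>{1..k}. 0 \<le> a i \<and> a i \<le> 1) \<and> (\<Sum>j=1..k. a j) \<le> 1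
     \<and> (\<forall>i\<in>{1..k}. a i + (\<Sum>j=1..k. a j) \<ge> 1)"

end

theory Submission
  imports Defs
begin

lemma orth_comp_subspace:
  fixes U :: "'a::euclidean_space set"
  shows "subspace {y. \<forall>x\<in>U. orthogonal x y}"
  unfolding subspace_def orthogonal_def by (auto simp: inner_add_right)

lemma core_minmax:
  fixes T :: "'a::euclidean_space \<Rightarrow> 'a"
  assumes lin: "linear T" and sym: "\<And>g h. inner (T g) h = inner g (T h)"
    and V: "subspace V" and dV: "k+1 \<le> dim V"
    and ray: "\<And>g. g \<in> V \<Longrightarrow> inner (T g) g \<le> c * inner g g"
  shows "k+1 \<le> dim (span {v. \<exists>l\<le>c. T v = l *\<^sub>R v})"
proof (rule ccontr)
  define G where "G = {v. \<exists>l\<le>c. T v = l *\<^sub>R v}"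
  define U where "U = span G"
  assume "\<not> k+1 \<le> dim (span {v. \<exists>l\<le>c. T v = l *\<^sub>R v})"
  hence dU: "dim U \<le> k" by (simp add: U_def G_def)
  define W where "W = {y. \<forall>x\<in>U. orthogonal x y}"
  have sU: "subspace U" by (simp add: U_def)
  have sW: "subspace W" unfolding W_def by (rule orth_comp_subspace)
  have e1: "dim W + dim U = dim (UNIV::'a set)"
    using dim_subspace_orthogonal_to_vectors[OF sU subspace_UNIV] by (simp add: W_def)
  have e2: "dim {x + y |x y. x \<in> V \<and> y \<in> W} + dim (V \<inter> W) = dim V + dim W"
    by (rule dim_sums_Int[OF V sW])
  have e3: "dim {x + y |x y. x \<in> V \<and> y \<in> W} \<le> dim (UNIV::'a set)"
    by (rule dim_subset) simp
  have "dim (V \<inter> W) \<ge> 1" using e1 e2 e3 dV dU by linarith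
  then obtain f where f: "f \<in> V" "f \<in> W" "f \<noteq> 0"
  proof -
    assume *: "\<And>f. f \<in> V \<Longrightarrow> f \<in> W \<Longrightarrow> f \<noteq> 0 \<Longrightarrow> thesis"
    show thesis
    proof (rule ccontr)
      assume "\<not> thesis"
      hence "V \<inter> W \<subseteq> {0}" using * by blast
      hence "dim (V \<inter> W) = 0" by (simp add: dim_eq_0)
      thus False using \<open>dim (V \<inter> W) \<ge> 1\<close> by linarith
    qed
  qed
  have TU: "T x \<in> U" if "x \<in> U" for x
  proof -
    have "T ` G \<subseteq> U"
    proof
      fix y assume "y \<in> T ` G"
      then obtain x l where "x \<in> G" "T x = l *\<^sub>R x" "y = T x" unfolding G_def by blast
      thus "y \<in> U" unfolding U_def by (simp add: span_base span_scale)
    qed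
    hence "span (T ` G) \<subseteq> U" using sU by (simp add: span_minimal)
    moreover have "T x \<in> span (T ` G)" using that unfolding U_def
      by (simp add: span_linear_image[OF lin])
    ultimately show ?thesis by blast
  qed
  have TW: "T y \<in> W" if "y \<in> W" for y
  proof -
    have "inner x (T y) = 0" if "x \<in> U" for x
    proof -
      have "T x \<in> U" using TU that .
      hence "inner (T x) y = 0" using \<open>y \<in> W\<close> unfolding W_def orthogonal_def by blast
      thus ?thesis using sym[of x y] by simp
    qed
    thus ?thesis unfolding W_def orthogonal_def by blast
  qed
  define q where "q g = inner (T g) g" for g
  define K where "K = sphere (0::'a) 1 \<inter> W"
  have cK: "compact K" unfolding K_def
    by (intro compact_Int_closed compact_sphere closed_subspace sW)
  have fK: "f /\<^sub>R norm f \<in> K" using f sW unfolding K_def by (auto simp: subspace_scale)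
  have contT: "continuous_on UNIV T"
    using lin by (simp add: linear_continuous_on linear_conv_bounded_linear)
  have cq: "continuous_on K q" unfolding q_def
    by (intro continuous_intros continuous_on_subset[OF contT]) auto
  obtain g0 where g0: "g0 \<in> K" and gmin: "\<And>y. y \<in> K \<Longrightarrow> q g0 \<le> q y"
    using continuous_attains_inf[OF cK _ cq] fK by blast
  define m where "m = q g0"
  have qscale: "q (a *\<^sub>R g) = a^2 * q g" for a g
    unfolding q_def using linear_scale[OF lin] by (simp add: power2_eq_square)
  have qdiv: "q (g /\<^sub>R norm g) = q g / (norm g)^2" for g
  proof -
    have "q (g /\<^sub>R norm g) = (inverse (norm g))^2 * q g" by (rule qscale)
    thus ?thesis by (simp add: power_inverse divide_inverse mult.commute)
  qed
  have mc: "m \<le> c"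
  proof -
    have "m \<le> q (f /\<^sub>R norm f)" unfolding m_def by (rule gmin[OF fK])
    also have "\<dots> = q f / (norm f)^2" by (rule qdiv)
    also have "\<dots> \<le> c * inner f f / (norm f)^2"
      using ray[OF f(1)] by (simp add: q_def divide_right_mono)
    also have "\<dots> = c" using f(3) by (simp add: power2_norm_eq_inner[symmetric])
    finally show ?thesis .
  qed
  have g0W: "g0 \<in> W" and ng0: "norm g0 = 1" using g0 by (auto simp: K_def)
  define h where "h = T g0 - m *\<^sub>R g0"
  have hW: "h \<in> W" unfolding h_def using TW[OF g0W] g0W sW
    by (simp add: subspace_diff subspace_scale)
  have ineq: "q (g0 + t *\<^sub>R h) \<ge> m * inner (g0 + t *\<^sub>R h) (g0 + t *\<^sub>R h)" for t
  proof (cases "g0 + t *\<^sub>R h = 0")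
    case True thus ?thesis by (simp add: q_def linear_0[OF lin])
  next
    case False
    define z where "z = g0 + t *\<^sub>R h"
    have zW: "z \<in> W" unfolding z_def using g0W hW sW by (simp add: subspace_add subspace_scale)
    have "z /\<^sub>R norm z \<in> K" using zW False sW unfolding K_def z_def by (auto simp: subspace_scale)
    hence "m \<le> q (z /\<^sub>R norm z)" unfolding m_def by (rule gmin)
    also have "\<dots> = q z / (norm z)^2" by (rule qdiv)
    finally have "m * (norm z)^2 \<le> q z" using False by (simp add: z_def pos_le_divide_eq)
    thus ?thesis by (simp add: z_def power2_norm_eq_inner)
  qed
  define H where "H = inner h h"
  define a where "a = q h - m * H"
  have key: "0 \<le> 2 * t * H + t^2 * a" for t
  proof -
    have c1: "inner (T h) g0 = inner (T g0) h" using sym[of h g0] by (simp add: inner_commute)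
    have c2: "inner h g0 = inner g0 h" by (simp add: inner_commute)
    have c3: "inner g0 g0 = 1" using ng0 by (simp add: power2_norm_eq_inner[symmetric])
    have lq: "q (g0 + t *\<^sub>R h) = q g0 + 2 * t * inner (T g0) h + t^2 * q h"
      unfolding q_def using linear_add[OF lin] linear_scale[OF lin]
      by (simp add: inner_add_left inner_add_right c1 power2_eq_square algebra_simps)
    have ln: "inner (g0 + t *\<^sub>R h) (g0 + t *\<^sub>R h) = 1 + 2 * t * inner g0 h + t^2 * H"
      unfolding H_def by (simp add: inner_add_left inner_add_right c2 c3 power2_eq_square algebra_simps)
    have hh: "inner (T g0) h - m * inner g0 h = H" unfolding H_def h_def
      by (simp add: inner_diff_left)
    have "q g0 + 2 * t * inner (T g0) h + t^2 * q h \<ge> m * (1 + 2 * t * inner g0 h + t^2 * H)"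
      using ineq[of t] lq ln by simp
    hence "0 \<le> 2 * t * (inner (T g0) h - m * inner g0 h) + t^2 * (q h - m * H)"
      unfolding m_def by (simp add: algebra_simps)
    thus ?thesis using hh unfolding a_def by simp
  qed
  have H0: "H = 0"
  proof (rule ccontr)
    assume "H \<noteq> 0"
    hence Hp: "H > 0" unfolding H_def by simp
    define s where "s = \<bar>a\<bar> + 1"
    have sp: "s > 0" unfolding s_def by simp
    define t where "t = - H / s"
    have "t^2 * a \<le> t^2 * s" by (intro mult_left_mono) (auto simp: s_def)
    also have "t^2 * s = H^2 / s" using sp by (simp add: t_def power2_eq_square)
    finally have 1: "t^2 * a \<le> H^2 / s" .
    have 2: "2 * t * H = - 2 * (H^2 / s)" by (simp add: t_def power2_eq_square)
    have 3: "H^2 / s > 0" using Hp sp by simp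
    show False using key[of t] 1 2 3 by linarith
  qed
  hence "h = 0" unfolding H_def by simp
  hence "T g0 = m *\<^sub>R g0" unfolding h_def by simp
  hence "g0 \<in> U" unfolding U_def G_def using mc by (auto intro: span_base)
  hence "inner g0 g0 = 0" using g0W unfolding W_def orthogonal_def by blast
  thus False using ng0 by simp
qed

lemma dim_Un_le:
  fixes A B :: "'a::euclidean_space set"
  shows "dim (A \<union> B) \<le> dim A + dim B"
proof -
  have "dim (A \<union> B) = dim (span (A \<union> B))" by simp
  also have "span (A \<union> B) = {x + y |x y. x \<in> span A \<and> y \<in> span B}" by (rule span_Un)
  also have "dim \<dots> \<le> dim (span A) + dim (span B)"
    using dim_sums_Int[of "span A" "span B"] by simp
  finally show ?thesis by simp
qed

lemma dim_UN_le:
  fixes S :: "'b \<Rightarrow> 'a::euclidean_space set"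
  assumes "finite F"
  shows "dim (\<Union>l\<in>F. S l) \<le> (\<Sum>l\<in>F. dim (S l))"
  using assms
proof (induction F rule: finite_induct)
  case empty then show ?case by simp
next
  case (insert x F)
  have "dim (\<Union>l\<in>insert x F. S l) = dim (S x \<union> (\<Union>l\<in>F. S l))" by simp
  also have "\<dots> \<le> dim (S x) + dim (\<Union>l\<in>F. S l)" by (rule dim_Un_le)
  also have "\<dots> \<le> dim (S x) + (\<Sum>l\<in>F. dim (S l))" using insert.IH by simp
  finally show ?case using insert.hyps by simp
qed

lemma sym_eigen_finite:
  fixes T :: "'a::euclidean_space \<Rightarrow> 'a"
  assumes lin: "linear T" and sym: "\<And>g h. inner (T g) h = inner g (T h)"
  shows "finite {l. \<exists>v. v \<noteq> 0 \<and> T v = l *\<^sub>R v}"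
proof -
  define EV where "EV = {l. \<exists>v. v \<noteq> 0 \<and> T v = l *\<^sub>R v}"
  define v where "v l = (SOME v. v \<noteq> 0 \<and> T v = l *\<^sub>R v)" for l
  have v: "v l \<noteq> 0 \<and> T (v l) = l *\<^sub>R v l" if "l \<in> EV" for l
    using that unfolding EV_def v_def by (metis (mono_tags, lifting) someI_ex mem_Collect_eq)
  have inj: "inj_on v EV"
  proof (rule inj_onI)
    fix l1 l2 assume "l1 \<in> EV" "l2 \<in> EV" "v l1 = v l2"
    hence "l1 *\<^sub>R v l1 = l2 *\<^sub>R v l1" using v by metis
    thus "l1 = l2" using v[OF \<open>l1 \<in> EV\<close>] by (simp add: scaleR_cancel_right)
  qed
  have "pairwise orthogonal (v ` EV)"
  proof (clarsimp simp: pairwise_def)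
    fix l1 l2 assume l: "l1 \<in> EV" "l2 \<in> EV" "v l1 \<noteq> v l2"
    hence ne: "l1 \<noteq> l2" by auto
    have "l1 * inner (v l1) (v l2) = inner (T (v l1)) (v l2)" using v[OF l(1)] by simp
    also have "\<dots> = inner (v l1) (T (v l2))" by (rule sym)
    also have "\<dots> = l2 * inner (v l1) (v l2)" using v[OF l(2)] by simp
    finally have "(l1 - l2) * inner (v l1) (v l2) = 0" by (simp add: algebra_simps)
    thus "orthogonal (v l1) (v l2)" using ne by (simp add: orthogonal_def)
  qed
  moreover have "0 \<notin> v ` EV" using v by auto
  ultimately have "independent (v ` EV)" by (rule pairwise_orthogonal_independent)
  hence "finite (v ` EV)" by (rule finiteI_independent)
  thus ?thesis using finite_imageD[OF _ inj] unfolding EV_def by blast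
qed

lemma sorted_count:
  fixes L :: "real list"
  assumes "sorted L" "k + 1 \<le> length (filter (\<lambda>x. x \<le> c) L)"
  shows "k < length L \<and> L ! k \<le> c"
proof -
  have kl: "k < length L" using assms(2) length_filter_le[of "\<lambda>x. x \<le> c" L] by linarith
  moreover have "L ! k \<le> c"
  proof (rule ccontr)
    assume "\<not> L ! k \<le> c"
    have big: "\<forall>y \<in> set (drop k L). \<not> y \<le> c"
    proof
      fix y assume "y \<in> set (drop k L)"
      then obtain i where i: "i < length L - k" "y = L ! (k + i)" by (auto simp: in_set_conv_nth)
      have "L ! k \<le> L ! (k + i)" using assms(1) i(1) by (intro sorted_nth_mono) auto
      thus "\<not> y \<le> c" using i(2) \<open>\<not> L ! k \<le> c\<close> by simp
    qed
    have "filter (\<lambda>x. x \<le> c) L = filter (\<lambda>x. x \<le> c) (take k L) @ filter (\<lambda>x. x \<le> c) (drop k L)"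
      by (metis append_take_drop_id filter_append)
    also have "filter (\<lambda>x. x \<le> c) (drop k L) = []" using big by (simp add: filter_empty_conv)
    finally have "length (filter (\<lambda>x. x \<le> c) L) \<le> k"
      using length_filter_le[of "\<lambda>x. x \<le> c" "take k L"] kl by simp
    thus False using assms(2) by simp
  qed
  ultimately show ?thesis by simp
qed

definition bil :: "real^'n^'n \<Rightarrow> ('n \<Rightarrow> real) \<Rightarrow> real^'n \<Rightarrow> real^'n \<Rightarrow> real" where
  "bil P mu u w = (\<Sum>x\<in>UNIV. mu x * ((mat 1 - P) *v u)$x * w$x)"

definition Nf :: "('n \<Rightarrow> real) \<Rightarrow> real^'n \<Rightarrow> real" where
  "Nf mu f = (\<Sum>x\<in>UNIV. mu x * (f$x)^2)"

definition sq :: "('n \<Rightarrow> real) \<Rightarrow> real^'n \<Rightarrow> real^'n" where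
  "sq mu v = (\<chi> x. sqrt (mu x) * v$x)"

definition isq :: "('n \<Rightarrow> real) \<Rightarrow> real^'n \<Rightarrow> real^'n" where
  "isq mu v = (\<chi> x. v$x / sqrt (mu x))"

definition Tm :: "real^'n^'n \<Rightarrow> ('n \<Rightarrow> real) \<Rightarrow> real^'n \<Rightarrow> real^'n" where
  "Tm P mu g = sq mu ((mat 1 - P) *v isq mu g)"

lemma Mv_comp: "((mat 1 - (P::real^'n^'n)) *v u)$x = u$x - (\<Sum>y\<in>UNIV. P$x$y * u$y)"
proof -
  have "(mat 1 - P) *v u = u - P *v u"
    unfolding matrix_vector_mult_diff_rdistrib matrix_vector_mul_lid ..
  thus ?thesis by (simp add: matrix_vector_mult_def)
qed

lemma sq_linear: "linear (sq mu)"
  by (rule linearI) (simp_all add: sq_def vec_eq_iff algebra_simps)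

lemma isq_linear: "linear (isq mu)"
  by (rule linearI) (simp_all add: isq_def vec_eq_iff add_divide_distrib)

lemma sq_isq: "(\<forall>x. mu x > 0) \<Longrightarrow> sq mu (isq mu v) = v"
  by (simp add: sq_def isq_def vec_eq_iff) (metis less_irrefl)

lemma isq_sq: "(\<forall>x. mu x > 0) \<Longrightarrow> isq mu (sq mu v) = v"
  by (simp add: sq_def isq_def vec_eq_iff) (metis less_irrefl)

lemma sq_inj: "(\<forall>x. mu x > 0) \<Longrightarrow> inj (sq mu)"
  by (metis injI isq_sq)

lemma Tm_linear: "linear (Tm P mu)"
proof -
  have "linear (sq mu \<circ> ((*v) (mat 1 - P)) \<circ> isq mu)"
    by (intro linear_compose isq_linear sq_linear matrix_vector_mul_linear)
  thus ?thesis by (simp add: Tm_def[abs_def] o_def)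
qed

lemma bil_expand: "bil P mu u w = (\<Sum>x\<in>UNIV. mu x * u$x * w$x) - (\<Sum>x\<in>UNIV. \<Sum>y\<in>UNIV. mu x * P$x$y * u$y * w$x)"
  unfolding bil_def Mv_comp
  by (simp add: algebra_simps sum_subtractf sum_distrib_left sum_distrib_right)

lemma bil_sym:
  assumes "reversible_prob P mu"
  shows "bil P mu u w = bil P mu w u"
proof -
  have rv: "mu x * P$x$y = mu y * P$y$x" for x y
    using assms unfolding reversible_prob_def by (metis mult.commute)
  have "(\<Sum>x\<in>UNIV. \<Sum>y\<in>UNIV. mu x * P$x$y * u$y * w$x)
      = (\<Sum>y\<in>UNIV. \<Sum>x\<in>UNIV. mu x * P$x$y * u$y * w$x)" by (rule sum.swap)
  also have "\<dots> = (\<Sum>y\<in>UNIV. \<Sum>x\<in>UNIV. mu y * P$y$x * w$x * u$y)"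
    by (intro sum.cong refl) (simp add: rv)
  finally show ?thesis unfolding bil_expand by (simp add: mult.commute mult.left_commute)
qed

lemma bil_quad:
  assumes "stochastic P"
  shows "bil P mu u u = (\<Sum>x\<in>UNIV. \<Sum>y\<in>UNIV. mu x * P$x$y * (u$x * (u$x - u$y)))"
proof -
  have rs: "(\<Sum>y\<in>UNIV. P$x$y) = 1" for x using assms unfolding stochastic_def by blast
  have "(\<Sum>x\<in>UNIV. \<Sum>y\<in>UNIV. mu x * P$x$y * (u$x * (u$x - u$y)))
     = (\<Sum>x\<in>UNIV. mu x * u$x * u$x * (\<Sum>y\<in>UNIV. P$x$y)) - (\<Sum>x\<in>UNIV. \<Sum>y\<in>UNIV. mu x * P$x$y * u$y * u$x)"
    by (simp add: algebra_simps sum_subtractf sum_distrib_left sum_distrib_right)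
  thus ?thesis unfolding bil_expand rs by simp
qed

lemma bil_sq_form:
  assumes "stochastic P" "reversible_prob P mu"
  shows "2 * bil P mu u u = (\<Sum>x\<in>UNIV. \<Sum>y\<in>UNIV. mu x * P$x$y * (u$x - u$y)^2)"
proof -
  have rv: "mu x * P$x$y = mu y * P$y$x" for x y
    using assms(2) unfolding reversible_prob_def by (metis mult.commute)
  have "bil P mu u u = (\<Sum>y\<in>UNIV. \<Sum>x\<in>UNIV. mu x * P$x$y * (u$x * (u$x - u$y)))"
    unfolding bil_quad[OF assms(1)] by (rule sum.swap)
  also have "\<dots> = (\<Sum>y\<in>UNIV. \<Sum>x\<in>UNIV. mu y * P$y$x * (u$x * (u$x - u$y)))"
    by (intro sum.cong refl) (simp add: rv)
  finally have b2: "bil P mu u u = (\<Sum>x\<in>UNIV. \<Sum>y\<in>UNIV. mu x * P$x$y * (u$y * (u$y - u$x)))" .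
  have "2 * bil P mu u u = bil P mu u u + bil P mu u u" by simp
  also have "\<dots> = (\<Sum>x\<in>UNIV. \<Sum>y\<in>UNIV. mu x * P$x$y * (u$x * (u$x - u$y)) + mu x * P$x$y * (u$y * (u$y - u$x)))"
    by (subst bil_quad[OF assms(1)], subst b2) (simp add: sum.distrib)
  also have "\<dots> = (\<Sum>x\<in>UNIV. \<Sum>y\<in>UNIV. mu x * P$x$y * (u$x - u$y)^2)"
    by (intro sum.cong refl) (simp add: power2_eq_square algebra_simps)
  finally show ?thesis .
qed

lemma bil_nonneg:
  assumes "stochastic P" "reversible_prob P mu"
  shows "0 \<le> bil P mu u u"
proof -
  have "0 \<le> (\<Sum>x\<in>UNIV. \<Sum>y\<in>UNIV. mu x * P$x$y * (u$x - u$y)^2)"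
    using assms unfolding stochastic_def reversible_prob_def
    by (intro sum_nonneg mult_nonneg_nonneg) auto
  thus ?thesis using bil_sq_form[OF assms, of u] by linarith
qed

lemma bil_le2:
  assumes "stochastic P" "reversible_prob P mu"
  shows "bil P mu u u \<le> 2 * Nf mu u"
proof -
  have rs: "(\<Sum>y\<in>UNIV. P$x$y) = 1" for x using assms unfolding stochastic_def by blast
  have rv: "mu x * P$x$y = mu y * P$y$x" for x y
    using assms(2) unfolding reversible_prob_def by (metis mult.commute)
  have nn: "0 \<le> mu x * P$x$y" for x y using assms unfolding stochastic_def reversible_prob_def by simp
  have "2 * bil P mu u u \<le> (\<Sum>x\<in>UNIV. \<Sum>y\<in>UNIV. mu x * P$x$y * (2 * (u$x)^2 + 2 * (u$y)^2))"
    unfolding bil_sq_form[OF assms]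
  proof (intro sum_mono mult_left_mono nn)
    fix x y show "(u$x - u$y)^2 \<le> 2 * (u$x)^2 + 2 * (u$y)^2"
      using sum_squares_ge_zero[of "u$x + u$y" 0] by (simp add: power2_eq_square algebra_simps)
  qed
  also have "\<dots> = 2 * (\<Sum>x\<in>UNIV. \<Sum>y\<in>UNIV. mu x * P$x$y * (u$x)^2) + 2 * (\<Sum>x\<in>UNIV. \<Sum>y\<in>UNIV. mu x * P$x$y * (u$y)^2)"
    by (simp add: algebra_simps sum.distrib sum_distrib_left)
  also have "(\<Sum>x\<in>UNIV. \<Sum>y\<in>UNIV. mu x * P$x$y * (u$x)^2) = Nf mu u"
    unfolding Nf_def by (simp add: sum_distrib_left[symmetric] mult.assoc[symmetric] rs
        flip: sum_distrib_right) 
  also have "(\<Sum>x\<in>UNIV. \<Sum>y\<in>UNIV. mu x * P$x$y * (u$y)^2) = (\<Sum>y\<in>UNIV. \<Sum>x\<in>UNIV. mu y * P$y$x * (u$y)^2)"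
    by (subst sum.swap) (simp add: rv)
  also have "\<dots> = Nf mu u"
    unfolding Nf_def by (simp add: sum_distrib_left[symmetric] mult.assoc[symmetric] rs
        flip: sum_distrib_right)
  finally show ?thesis by simp
qed

lemma Tm_inner:
  assumes pos: "\<forall>x. mu x > 0"
  shows "inner (Tm P mu g) h = bil P mu (isq mu g) (isq mu h)"
  unfolding bil_def Tm_def inner_vec_def
proof (intro sum.cong refl)
  fix x
  have m: "mu x = sqrt (mu x) * sqrt (mu x)" using pos[rule_format, of x] by simp
  have "sqrt (mu x) > 0" using pos by simp
  thus "inner (sq mu ((mat 1 - P) *v isq mu g) $ x) (h $ x) =
        mu x * ((mat 1 - P) *v isq mu g) $ x * isq mu h $ x"
    using m by (simp add: sq_def isq_def field_simps)
qed

lemma Tm_sym: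
  assumes "reversible_prob P mu" "\<forall>x. mu x > 0"
  shows "inner (Tm P mu g) h = inner g (Tm P mu h)"
proof -
  have "inner (Tm P mu g) h = bil P mu (isq mu g) (isq mu h)" by (rule Tm_inner[OF assms(2)])
  also have "\<dots> = bil P mu (isq mu h) (isq mu g)" by (rule bil_sym[OF assms(1)])
  also have "\<dots> = inner (Tm P mu h) g" by (rule Tm_inner[OF assms(2), symmetric])
  finally show ?thesis by (simp add: inner_commute)
qed

lemma Tm_sq: "\<forall>x. mu x > 0 \<Longrightarrow> Tm P mu (sq mu f) = sq mu ((mat 1 - P) *v f)"
  by (simp add: Tm_def isq_sq)

lemma inner_sq: "\<forall>x. mu x > 0 \<Longrightarrow> inner (sq mu f) (sq mu f) = Nf mu f"
  unfolding inner_vec_def Nf_def sq_def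
  by (intro sum.cong refl) (simp add: power2_eq_square algebra_simps less_imp_le)

lemma sq_zero_iff: "\<forall>x. mu x > 0 \<Longrightarrow> sq mu f = 0 \<longleftrightarrow> f = 0"
proof -
  assume pos: "\<forall>x. mu x > 0"
  have "sqrt (mu x) \<noteq> 0" for x using pos by (metis less_irrefl real_sqrt_eq_zero_cancel_iff)
  thus ?thesis by (simp add: sq_def vec_eq_iff)
qed

lemma sq_scale: "sq mu (l *\<^sub>R f) = l *\<^sub>R sq mu f"
  by (simp add: sq_def vec_eq_iff)

lemma EV_eq:
  assumes pos: "\<forall>x. mu x > 0"
  shows "eigenvalues_negL P = {l. \<exists>v. v \<noteq> 0 \<and> Tm P mu v = l *\<^sub>R v}"
proof safe
  fix l assume "l \<in> eigenvalues_negL P"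
  then obtain f where f: "f \<noteq> 0" "(mat 1 - P) *v f = l *\<^sub>R f" unfolding eigenvalues_negL_def by blast
  have "sq mu f \<noteq> 0" using f(1) sq_zero_iff[OF pos] by blast
  moreover have "Tm P mu (sq mu f) = l *\<^sub>R sq mu f"
    using Tm_sq[OF pos] f(2) by (simp add: sq_scale)
  ultimately show "\<exists>v. v \<noteq> 0 \<and> Tm P mu v = l *\<^sub>R v" by blast
next
  fix l v assume v: "v \<noteq> 0" "Tm P mu v = l *\<^sub>R v"
  define f where "f = isq mu v"
  have vf: "v = sq mu f" unfolding f_def using sq_isq[OF pos] by simp
  have "f \<noteq> 0" using v(1) vf sq_zero_iff[OF pos] by blast
  moreover have "sq mu ((mat 1 - P) *v f) = sq mu (l *\<^sub>R f)"
    using v(2) vf Tm_sq[OF pos] by (simp add: sq_scale)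
  hence "(mat 1 - P) *v f = l *\<^sub>R f" using sq_inj[OF pos] by (meson injD)
  ultimately show "l \<in> eigenvalues_negL P" unfolding eigenvalues_negL_def by blast
qed

lemma ES_eq:
  assumes pos: "\<forall>x. mu x > 0"
  shows "sq mu ` eigenspace_negL P l = {v. Tm P mu v = l *\<^sub>R v}"
proof safe
  fix f assume "f \<in> eigenspace_negL P l"
  thus "Tm P mu (sq mu f) = l *\<^sub>R sq mu f"
    unfolding eigenspace_negL_def using Tm_sq[OF pos] by (simp add: sq_scale)
next
  fix v assume v: "Tm P mu v = l *\<^sub>R v"
  define f where "f = isq mu v"
  have vf: "v = sq mu f" unfolding f_def using sq_isq[OF pos] by simp
  have "sq mu ((mat 1 - P) *v f) = sq mu (l *\<^sub>R f)"
    using v vf Tm_sq[OF pos] by (simp add: sq_scale)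
  hence "(mat 1 - P) *v f = l *\<^sub>R f" using sq_inj[OF pos] by (meson injD)
  thus "v \<in> sq mu ` eigenspace_negL P l" using vf unfolding eigenspace_negL_def by blast
qed

lemma dim_ES:
  assumes pos: "\<forall>x. mu x > 0"
  shows "dim (eigenspace_negL P l) = dim {v. Tm P mu v = l *\<^sub>R v}"
proof -
  have "dim (sq mu ` eigenspace_negL P l) = dim (eigenspace_negL P l)"
    by (rule dim_image_eq[OF sq_linear]) (metis inj_on_subset sq_inj[OF pos] subset_UNIV)
  thus ?thesis using ES_eq[OF pos] by simp
qed

lemma eigen_finite:
  assumes rv: "reversible_prob P mu" and pos: "\<forall>x. mu x > 0"
  shows "finite (eigenvalues_negL P)"
  unfolding EV_eq[OF pos] by (rule sym_eigen_finite[OF Tm_linear Tm_sym[OF rv pos]])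

lemma length_filter_replicate: "length (filter Q (replicate n x)) = (if Q x then n else 0)"
  by (induction n) auto

lemma count_eigen:
  assumes fin: "finite (eigenvalues_negL P)"
  shows "length (filter (\<lambda>x. x \<le> c) (eigen_list P))
       = (\<Sum>l\<in>{l\<in>eigenvalues_negL P. l \<le> c}. dim (eigenspace_negL P l))"
proof -
  define d where "d l = dim (eigenspace_negL P l)" for l
  have "length (filter (\<lambda>x. x \<le> c) (eigen_list P))
      = length (filter (\<lambda>x. x \<le> c) (concat (map (\<lambda>l. replicate (d l) l)
                                   (sorted_list_of_set (eigenvalues_negL P)))))"
    unfolding eigen_list_def d_def by (simp add: filter_sort)
  also have "\<dots> = sum_list (map (\<lambda>l. if l \<le> c then d l else 0) (sorted_list_of_set (eigenvalues_negL P)))"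
    by (simp add: filter_concat length_concat o_def length_filter_replicate)
  also have "\<dots> = (\<Sum>l\<in>eigenvalues_negL P. if l \<le> c then d l else 0)"
    using fin by (simp add: sum_list_distinct_conv_sum_set)
  also have "\<dots> = (\<Sum>l\<in>{l\<in>eigenvalues_negL P. l \<le> c}. d l)"
    using fin by (simp add: sum.inter_filter)
  finally show ?thesis unfolding d_def .
qed

lemma minmax:
  assumes st: "stochastic P" and rv: "reversible_prob P mu" and pos: "\<forall>x. mu x > 0"
    and V: "subspace V" and dV: "k + 1 \<le> dim V"
    and ray: "\<And>f. f \<in> V \<Longrightarrow> bil P mu f f \<le> c * Nf mu f"
  shows "k < length (eigen_list P) \<and> lam P k \<le> c"
proof -
  let ?T = "Tm P mu"
  have lin: "linear ?T" by (rule Tm_linear)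
  have sym: "\<And>g h. inner (?T g) h = inner g (?T h)" by (rule Tm_sym[OF rv pos])
  have "sq mu ` V = span (sq mu ` V)" using span_linear_image[OF sq_linear[of mu], of V] V
    by (metis span_eq_iff)
  hence sV: "subspace (sq mu ` V)" by (metis subspace_span)
  have "dim (sq mu ` V) = dim V"
    by (rule dim_image_eq[OF sq_linear]) (metis inj_on_subset sq_inj[OF pos] subset_UNIV)
  hence dV': "k + 1 \<le> dim (sq mu ` V)" using dV by simp
  have ray': "inner (?T g) g \<le> c * inner g g" if "g \<in> sq mu ` V" for g
  proof -
    obtain f where f: "f \<in> V" "g = sq mu f" using \<open>g \<in> sq mu ` V\<close> by blast
    have "inner (?T g) g = bil P mu f f" using f(2) Tm_inner[OF pos] isq_sq[OF pos] by simp
    moreover have "inner g g = Nf mu f" using f(2) inner_sq[OF pos] by simp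
    ultimately show ?thesis using ray[OF f(1)] by simp
  qed
  define G where "G = {v. \<exists>l\<le>c. ?T v = l *\<^sub>R v}"
  have k1: "k + 1 \<le> dim (span G)" unfolding G_def by (rule core_minmax[OF lin sym sV dV' ray'])
  have fin: "finite (eigenvalues_negL P)" by (rule eigen_finite[OF rv pos])
  define F where "F = {l\<in>eigenvalues_negL P. l \<le> c}"
  have finF: "finite F" using fin unfolding F_def by simp
  have "G \<subseteq> span (\<Union>l\<in>F. {v. ?T v = l *\<^sub>R v})"
  proof
    fix v assume "v \<in> G"
    then obtain l where l: "l \<le> c" "?T v = l *\<^sub>R v" unfolding G_def by blast
    show "v \<in> span (\<Union>l\<in>F. {v. ?T v = l *\<^sub>R v})"
    proof (cases "v = 0")
      case True thus ?thesis by (simp add: span_zero)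
    next
      case False
      hence "l \<in> F" using l unfolding F_def EV_eq[OF pos] by blast
      thus ?thesis using l by (intro span_base) blast
    qed
  qed
  hence "dim G \<le> dim (span (\<Union>l\<in>F. {v. ?T v = l *\<^sub>R v}))" by (rule dim_subset)
  also have "\<dots> = dim (\<Union>l\<in>F. {v. ?T v = l *\<^sub>R v})" by simp
  also have "\<dots> \<le> (\<Sum>l\<in>F. dim {v. ?T v = l *\<^sub>R v})" by (rule dim_UN_le[OF finF])
  also have "\<dots> = (\<Sum>l\<in>F. dim (eigenspace_negL P l))" using dim_ES[OF pos] by simp
  also have "\<dots> = length (filter (\<lambda>x. x \<le> c) (eigen_list P))"
    unfolding F_def by (rule count_eigen[OF fin, symmetric])
  finally have "k + 1 \<le> length (filter (\<lambda>x. x \<le> c) (eigen_list P))" using k1 by simp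
  moreover have "sorted (eigen_list P)" unfolding eigen_list_def by simp
  ultimately show ?thesis unfolding lam_def using sorted_count by blast
qed

lemma eigen_nonneg:
  assumes st: "stochastic P" and rv: "reversible_prob P mu" and pos: "\<forall>x. mu x > 0"
    and l: "l \<in> set (eigen_list P)"
  shows "0 \<le> l"
proof -
  have fin: "finite (eigenvalues_negL P)" by (rule eigen_finite[OF rv pos])
  have "l \<in> eigenvalues_negL P" using l fin unfolding eigen_list_def
    by (auto split: if_splits)
  then obtain f where f: "f \<noteq> 0" "(mat 1 - P) *v f = l *\<^sub>R f" unfolding eigenvalues_negL_def by blast
  have "bil P mu f f = l * Nf mu f" unfolding bil_def Nf_def f(2)
    by (simp add: sum_distrib_left power2_eq_square algebra_simps)
  moreover have "0 \<le> bil P mu f f" by (rule bil_nonneg[OF st rv])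
  moreover have "Nf mu f > 0"
  proof -
    obtain x where x: "f$x \<noteq> 0" using f(1) by (metis vec_eq_iff zero_index)
    have "0 < mu x * (f$x)^2" using x pos by simp
    also have "\<dots> \<le> Nf mu f" unfolding Nf_def
    proof (rule member_le_sum)
      fix y show "0 \<le> mu y * (f$y)^2" using pos by (metis less_imp_le mult_nonneg_nonneg zero_le_power2)
    qed auto
    finally show ?thesis .
  qed
  ultimately show ?thesis by (metis zero_le_mult_iff not_less)
qed

definition ind :: "'n set \<Rightarrow> real^'n" where
  "ind S = (\<chi> x. if x \<in> S then 1 else 0)"

lemma pos_meas_nonempty: "a > 0 \<Longrightarrow> a \<le> meas mu S \<Longrightarrow> S \<noteq> {}"
  unfolding meas_def by auto

lemma ind_family_dim:
  fixes K :: "nat \<Rightarrow> 'n::finite set"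
  assumes disj: "\<And>i j. i \<le> k \<Longrightarrow> j \<le> k \<Longrightarrow> i \<noteq> j \<Longrightarrow> K i \<inter> K j = {}"
    and ne: "\<And>i. i \<le> k \<Longrightarrow> K i \<noteq> {}"
  shows "k + 1 \<le> dim (UNIV :: (real^'n) set)"
proof -
  define vs where "vs = (\<lambda>i. ind (K i)) ` {..k}"
  have inj: "inj_on (\<lambda>i. ind (K i)) {..k}"
  proof (rule inj_onI)
    fix i j assume ij: "i \<in> {..k}" "j \<in> {..k}" "ind (K i) = ind (K j)"
    show "i = j"
    proof (rule ccontr)
      assume "i \<noteq> j"
      obtain x where x: "x \<in> K i" using ne ij(1) by auto
      have "x \<notin> K j" using disj[of i j] ij \<open>i \<noteq> j\<close> x by auto
      hence "ind (K i) $ x \<noteq> ind (K j) $ x" using x by (simp add: ind_def)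
      thus False using ij(3) by simp
    qed
  qed
  have card: "card vs = k + 1" unfolding vs_def using card_image[OF inj] by simp
  have "pairwise orthogonal vs"
  proof (clarsimp simp: pairwise_def vs_def)
    fix i j assume ij: "i \<le> k" "j \<le> k" "ind (K i) \<noteq> ind (K j)"
    hence "i \<noteq> j" by auto
    hence "K i \<inter> K j = {}" using disj ij by auto
    thus "orthogonal (ind (K i)) (ind (K j))"
      unfolding orthogonal_def inner_vec_def ind_def by (intro sum.neutral) auto
  qed
  moreover have "0 \<notin> vs"
  proof
    assume "0 \<in> vs"
    then obtain i where i: "i \<le> k" "ind (K i) = 0" unfolding vs_def by auto
    obtain x where "x \<in> K i" using ne i(1) by auto
    hence "ind (K i) $ x = 1" by (simp add: ind_def)
    thus False using i(2) by simp
  qed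
  ultimately have indep: "independent vs" by (rule pairwise_orthogonal_independent)
  have dV: "k + 1 \<le> dim (span vs)" using dim_span_eq_card_independent[OF indep] card by simp
  thus ?thesis using dim_subset[of "span vs" "UNIV :: (real^'n) set"] by simp
qed

lemma step_generic:
  fixes P :: "real^'n^'n" and K :: "nat \<Rightarrow> 'n set"
  assumes st: "stochastic P" and rv: "reversible_prob P mu" and pos: "\<forall>x. mu x > 0"
   and disj: "\<And>i j. i \<le> k \<Longrightarrow> j \<le> k \<Longrightarrow> i \<noteq> j \<Longrightarrow> K i \<inter> K j = {}"
   and noedge: "\<And>i j x y. i \<le> k \<Longrightarrow> j \<le> k \<Longrightarrow> i \<noteq> j \<Longrightarrow> x \<in> K i \<Longrightarrow> y \<in> K j \<Longrightarrow> P$x$y = 0"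
   and mK: "\<And>i. i \<le> k \<Longrightarrow> a \<le> meas mu (K i)" and a: "a > 0"
  shows "lam P k \<le> meas mu (- (\<Union>i\<le>k. K i)) / a"
proof -
  define R where "R = - (\<Union>i\<le>k. K i)"
  define \<delta> where "\<delta> = meas mu R"
  define vs where "vs = (\<lambda>i. ind (K i)) ` {..k}"
  have ne: "K i \<noteq> {}" if "i \<le> k" for i using pos_meas_nonempty[OF a mK[OF that]] .
  have inj: "inj_on (\<lambda>i. ind (K i)) {..k}"
  proof (rule inj_onI)
    fix i j assume ij: "i \<in> {..k}" "j \<in> {..k}" "ind (K i) = ind (K j)"
    show "i = j"
    proof (rule ccontr)
      assume "i \<noteq> j"
      obtain x where x: "x \<in> K i" using ne ij(1) by auto
      have "x \<notin> K j" using disj[of i j] ij \<open>i \<noteq> j\<close> x by auto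
      hence "ind (K i) $ x \<noteq> ind (K j) $ x" using x by (simp add: ind_def)
      thus False using ij(3) by simp
    qed
  qed
  have card: "card vs = k + 1" unfolding vs_def using card_image[OF inj] by simp
  have "pairwise orthogonal vs"
  proof (clarsimp simp: pairwise_def vs_def)
    fix i j assume ij: "i \<le> k" "j \<le> k" "ind (K i) \<noteq> ind (K j)"
    hence "i \<noteq> j" by auto
    hence "K i \<inter> K j = {}" using disj ij by auto
    thus "orthogonal (ind (K i)) (ind (K j))"
      unfolding orthogonal_def inner_vec_def ind_def by (intro sum.neutral) auto
  qed
  moreover have "0 \<notin> vs"
  proof
    assume "0 \<in> vs"
    then obtain i where i: "i \<le> k" "ind (K i) = 0" unfolding vs_def by auto
    obtain x where "x \<in> K i" using ne i(1) by auto
    hence "ind (K i) $ x = 1" by (simp add: ind_def)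
    thus False using i(2) by simp
  qed
  ultimately have indep: "independent vs" by (rule pairwise_orthogonal_independent)
  have dV: "k + 1 \<le> dim (span vs)" using dim_span_eq_card_independent[OF indep] card by simp
  have ray: "bil P mu f f \<le> (\<delta> / a) * Nf mu f" if "f \<in> span vs" for f
  proof -
    have finvs: "finite vs" unfolding vs_def by simp
    have "f \<in> range (\<lambda>u. \<Sum>v\<in>vs. u v *\<^sub>R v)" using that span_finite[OF finvs] by simp
    then obtain u where u: "f = (\<Sum>v\<in>vs. u v *\<^sub>R v)" by blast
    define c where "c i = u (ind (K i))" for i
    have fsum: "f = (\<Sum>i\<le>k. c i *\<^sub>R ind (K i))"
      unfolding u vs_def c_def by (simp add: sum.reindex[OF inj])
    have fx: "f$x = (\<Sum>i\<le>k. c i * (if x \<in> K i then 1 else 0))" for x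
      unfolding fsum by (simp add: ind_def)
    have F1: "f$x = c i" if "i \<le> k" "x \<in> K i" for x i
    proof -
      have "f$x = (\<Sum>j\<le>k. if j = i then c j else 0)" unfolding fx
      proof (intro sum.cong refl)
        fix j assume "j \<in> {..k}"
        thus "c j * (if x \<in> K j then 1 else 0) = (if j = i then c j else 0)"
          using disj[of i j] that by auto
      qed
      thus ?thesis using that by simp
    qed
    have F2: "f$x = 0" if "x \<in> R" for x
      unfolding fx using that by (auto simp: R_def intro!: sum.neutral)
    define S where "S = (\<Sum>i\<le>k. (c i)^2)"
    have F3: "(f$x)^2 \<le> S" for x
    proof (cases "x \<in> R")
      case True thus ?thesis using F2 by (simp add: S_def sum_nonneg)
    next
      case False
      then obtain i where i: "i \<le> k" "x \<in> K i" unfolding R_def by auto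
      have "(c i)^2 \<le> S" unfolding S_def by (rule member_le_sum) (use i in auto)
      thus ?thesis using F1[OF i] by simp
    qed
    have mu0: "0 \<le> mu x" for x using pos by (metis less_imp_le)
    have P0: "0 \<le> P$x$y" for x y using st unfolding stochastic_def by blast
    have rs: "(\<Sum>y\<in>UNIV. P$x$y) = 1" for x using st unfolding stochastic_def by blast
    have rv': "mu x * P$x$y = mu y * P$y$x" for x y
      using rv unfolding reversible_prob_def by (metis mult.commute)
    have tm: "mu x * P$x$y * (f$x * (f$x - f$y)) \<le> (if y \<in> R then mu x * P$x$y * (f$x)^2 else 0)" for x y
    proof (cases "y \<in> R")
      case True thus ?thesis using F2[OF True] by (simp add: power2_eq_square)
    next
      case False
      then obtain j where j: "j \<le> k" "y \<in> K j" unfolding R_def by auto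
      show ?thesis
      proof (cases "x \<in> R")
        case True thus ?thesis using F2[OF True] False by simp
      next
        case xF: False
        then obtain i where i: "i \<le> k" "x \<in> K i" unfolding R_def by auto
        show ?thesis
        proof (cases "i = j")
          case True thus ?thesis using F1[OF i] F1[OF j] False by simp
        next
          case ne: False
          thus ?thesis using noedge[OF i(1) j(1) ne i(2) j(2)] False by simp
        qed
      qed
    qed
    have "bil P mu f f \<le> (\<Sum>x\<in>UNIV. \<Sum>y\<in>UNIV. if y \<in> R then mu x * P$x$y * (f$x)^2 else 0)"
      unfolding bil_quad[OF st] by (intro sum_mono tm)
    also have "\<dots> = (\<Sum>y\<in>UNIV. \<Sum>x\<in>UNIV. if y \<in> R then mu y * P$y$x * (f$x)^2 else 0)"
      by (subst sum.swap) (intro sum.cong refl, metis rv')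
    also have "\<dots> \<le> (\<Sum>y\<in>UNIV. if y \<in> R then mu y * S else 0)"
    proof (intro sum_mono)
      fix y
      show "(\<Sum>x\<in>UNIV. if y \<in> R then mu y * P$y$x * (f$x)^2 else 0) \<le> (if y \<in> R then mu y * S else 0)"
      proof (cases "y \<in> R")
        case True
        have "(\<Sum>x\<in>UNIV. mu y * P$y$x * (f$x)^2) \<le> (\<Sum>x\<in>UNIV. mu y * P$y$x * S)"
          by (intro sum_mono mult_left_mono F3 mult_nonneg_nonneg mu0 P0)
        also have "\<dots> = mu y * S" by (simp add: sum_distrib_left[symmetric] sum_distrib_right[symmetric] rs)
        finally show ?thesis using True by simp
      qed simp
    qed
    also have "\<dots> = \<delta> * S" unfolding \<delta>_def meas_def
      by (simp add: sum.If_cases sum_distrib_right)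
    finally have b1: "bil P mu f f \<le> \<delta> * S" .
    have fin: "finite (K i)" for i by simp
    have "a * S = (\<Sum>i\<le>k. a * (c i)^2)" unfolding S_def by (simp add: sum_distrib_left)
    also have "\<dots> \<le> (\<Sum>i\<le>k. meas mu (K i) * (c i)^2)"
      by (intro sum_mono mult_right_mono mK) auto
    also have "\<dots> = (\<Sum>i\<le>k. \<Sum>x\<in>K i. mu x * (f$x)^2)"
    proof (intro sum.cong refl)
      fix i assume "i \<in> {..k}"
      hence "\<And>x. x \<in> K i \<Longrightarrow> f$x = c i" using F1 by auto
      thus "meas mu (K i) * (c i)^2 = (\<Sum>x\<in>K i. mu x * (f$x)^2)"
        unfolding meas_def by (simp add: sum_distrib_right)
    qed
    also have "\<dots> = (\<Sum>x\<in>(\<Union>i\<le>k. K i). mu x * (f$x)^2)"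
      by (rule sum.UNION_disjoint[symmetric]) (use disj in auto)
    also have "\<dots> \<le> Nf mu f" unfolding Nf_def
      by (rule sum_mono2) (auto intro!: mult_nonneg_nonneg mu0)
    finally have b2: "a * S \<le> Nf mu f" .
    have d0: "0 \<le> \<delta>" unfolding \<delta>_def meas_def by (intro sum_nonneg mu0)
    have "\<delta> * S = (\<delta> / a) * (a * S)" using a by simp
    also have "\<dots> \<le> (\<delta> / a) * Nf mu f" using b2 d0 a by (intro mult_left_mono) auto
    finally show ?thesis using b1 by simp
  qed
  have "k < length (eigen_list P) \<and> lam P k \<le> \<delta> / a"
    by (rule minmax[OF st rv pos subspace_span dV ray])
  thus ?thesis unfolding \<delta>_def R_def by simp
qed

lemma mu_pos:
  assumes st: "stochastic P" and irr: "irreducible P" and rv: "reversible_prob P mu"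
  shows "\<forall>x. mu x > 0"
proof -
  have mu0: "0 \<le> mu x" for x using rv unfolding reversible_prob_def by blast
  have P0: "0 \<le> P$x$y" for x y using st unfolding stochastic_def by blast
  have prp: "mu y > 0" if "mu x > 0" "(x, y) \<in> edges P" for x y
  proof -
    have "P$x$y * mu x = P$y$x * mu y" using rv unfolding reversible_prob_def by blast
    moreover have "P$x$y * mu x > 0" using that unfolding edges_def by simp
    ultimately have "mu y \<noteq> 0" by auto
    thus ?thesis using mu0[of y] by simp
  qed
  obtain x0 where x0: "mu x0 > 0"
  proof -
    assume *: "\<And>x0. mu x0 > 0 \<Longrightarrow> thesis"
    show thesis
    proof (rule ccontr)
      assume "\<not> thesis"
      hence "\<forall>x. mu x = 0" using * mu0 by (metis less_eq_real_def)
      thus False using rv unfolding reversible_prob_def by simp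
    qed
  qed
  show ?thesis
  proof
    fix y
    have "(x0, y) \<in> (edges P)\<^sup>+" using irr unfolding irreducible_def by blast
    thus "mu y > 0"
    proof (induction rule: trancl_induct)
      case (base y) thus ?case using prp x0 by blast
    next
      case (step y z) thus ?case using prp by blast
    qed
  qed
qed

lemma edge_sym:
  assumes st: "stochastic P" and rv: "reversible_prob P mu" and pos: "\<forall>x. mu x > 0"
    and e: "(x, y) \<in> edges P"
  shows "(y, x) \<in> edges P"
proof -
  have "P$x$y * mu x = P$y$x * mu y" using rv unfolding reversible_prob_def by blast
  moreover have "P$x$y * mu x > 0" using e pos unfolding edges_def by simp
  ultimately have "P$y$x \<noteq> 0" by auto
  moreover have "0 \<le> P$y$x" using st unfolding stochastic_def by blast
  ultimately show ?thesis unfolding edges_def by simp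
qed

lemma gdist_reach:
  assumes irr: "irreducible P"
  shows "(x, y) \<in> edges P ^^ gdist P x y"
proof -
  have "\<exists>n. (x, y) \<in> edges P ^^ n"
  proof (cases "x = y")
    case True thus ?thesis by (metis relpow_0_I)
  next
    case False
    have "(x, y) \<in> (edges P)\<^sup>+" using irr unfolding irreducible_def by blast
    thus ?thesis using trancl_power by blast
  qed
  thus ?thesis unfolding gdist_def by (rule LeastI_ex)
qed

lemma gdist_le: "(x, y) \<in> edges P ^^ n \<Longrightarrow> gdist P x y \<le> n"
  unfolding gdist_def by (rule Least_le)

lemma gdist_refl: "gdist P x x = 0"
  by (metis gdist_le relpow_0_I le_zero_eq)

lemma gdist_tri:
  assumes irr: "irreducible P"
  shows "gdist P x z \<le> gdist P x y + gdist P y z"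
proof -
  have "(x, z) \<in> edges P ^^ gdist P x y O edges P ^^ gdist P y z"
    using gdist_reach[OF irr, of x y] gdist_reach[OF irr, of y z] by blast
  hence "(x, z) \<in> edges P ^^ (gdist P x y + gdist P y z)" by (simp add: relpow_add)
  thus ?thesis by (rule gdist_le)
qed

lemma gdist_edge: "P$x$y > 0 \<Longrightarrow> gdist P x y \<le> 1"
  by (rule gdist_le) (simp add: edges_def)

lemma relpow_sym:
  assumes sym: "\<And>x y. (x, y) \<in> R \<Longrightarrow> (y, x) \<in> R"
  shows "(x, y) \<in> R ^^ n \<Longrightarrow> (y, x) \<in> R ^^ n"
proof (induction n arbitrary: x y)
  case 0 thus ?case by simp
next
  case (Suc n)
  then obtain z where "(x, z) \<in> R ^^ n" "(z, y) \<in> R" by auto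
  hence "(z, x) \<in> R ^^ n" "(y, z) \<in> R" using Suc.IH sym by auto
  thus ?case by (rule relpow_Suc_I2[rotated])
qed

lemma gdist_sym:
  assumes st: "stochastic P" and irr: "irreducible P" and rv: "reversible_prob P mu"
  shows "gdist P x y = gdist P y x"
proof -
  have pos: "\<forall>x. mu x > 0" by (rule mu_pos[OF st irr rv])
  have s: "\<And>x y. (x, y) \<in> edges P \<Longrightarrow> (y, x) \<in> edges P" using edge_sym[OF st rv pos] by blast
  have "gdist P y x \<le> gdist P x y" for x y
    using relpow_sym[OF s gdist_reach[OF irr, of x y]] by (rule gdist_le)
  thus ?thesis by (metis le_antisym)
qed

lemma enat_INF_le:
  "(INF y\<in>S. enat (g y)) \<le> enat m \<longleftrightarrow> (\<exists>y\<in>S. g y \<le> m)"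
proof
  assume *: "(INF y\<in>S. enat (g y)) \<le> enat m"
  have "S \<noteq> {}"
  proof
    assume "S = {}"
    hence "(INF y\<in>S. enat (g y)) = \<infinity>" by (simp add: top_enat_def)
    thus False using * by simp
  qed
  hence "(INF y\<in>S. enat (g y)) \<in> (\<lambda>y. enat (g y)) ` S"
    unfolding Inf_enat_def by (auto intro: LeastI)
  then obtain y where "y \<in> S" "(INF y\<in>S. enat (g y)) = enat (g y)" by auto
  thus "\<exists>y\<in>S. g y \<le> m" using * by auto
next
  assume "\<exists>y\<in>S. g y \<le> m"
  then obtain y where "y \<in> S" "g y \<le> m" by blast
  thus "(INF y\<in>S. enat (g y)) \<le> enat m" by (meson INF_lower2 enat_ord_simps(1))
qed

lemma nbhd_iff: "x \<in> nbhd P S m \<longleftrightarrow> (\<exists>y\<in>S. gdist P x y \<le> m)"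
  unfolding nbhd_def set_dist_def by (simp add: enat_INF_le)

lemma set_dist_le: "a \<in> A \<Longrightarrow> b \<in> B \<Longrightarrow> set_dist P A B \<le> enat (gdist P a b)"
  unfolding set_dist_def by (meson INF_lower2 order_refl)

lemma meas_nonneg: "\<forall>x. mu x > 0 \<Longrightarrow> 0 \<le> meas mu S"
  unfolding meas_def by (intro sum_nonneg) (metis less_imp_le)

lemma meas_mono: "\<forall>x. mu x > 0 \<Longrightarrow> S \<subseteq> T \<Longrightarrow> meas mu (S::'n::finite set) \<le> meas mu T"
  unfolding meas_def by (rule sum_mono2) (auto intro: less_imp_le)

lemma meas_compl:
  assumes "reversible_prob P mu"
  shows "meas mu (- (S::'n::finite set)) = 1 - meas mu S"
proof -
  have "(\<Sum>x\<in>UNIV. mu x) = 1" using assms unfolding reversible_prob_def by blast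
  moreover have "(\<Sum>x\<in>UNIV. mu x) = (\<Sum>x\<in>UNIV - S. mu x) + (\<Sum>x\<in>S. mu x)"
    by (rule sum.subset_diff) auto
  ultimately show ?thesis unfolding meas_def by (simp add: Compl_eq_Diff_UNIV)
qed

theorem theorem3p1:
  fixes P :: "real^'n^'n" and mu :: "'n \<Rightarrow> real"
    and k :: nat and A :: "nat \<Rightarrow> 'n set" and n :: nat
  assumes "stochastic P" and "irreducible P" and "reversible_prob P mu"
    and "k \<ge> 1"
    and "(INF ij\<in>{(i, j). i \<in> {1..k} \<and> j \<in> {1..k} \<and> i \<noteq> j}.
            set_dist P (A (fst ij)) (A (snd ij))) \<ge> 1"
    and "in_Delta k (\<lambda>i. meas mu (A i))"
    and "1 \<le> n"
    and "2 * enat n \<le> (INF ij\<in>{(i, j). i \<in> {1..k} \<and> j \<in> {1..k} \<and> i \<noteq> j}.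
            set_dist P (A (fst ij)) (A (snd ij)))"
  shows "meas mu (nbhd P (\<Union>i\<in>{1..k}. A i) n)
           \<ge> 1 - (1 - meas mu (\<Union>i\<in>{1..k}. A i)) / (1 + lam P k) ^ n"
proof -
  note st = assms(1) and irr = assms(2) and rv = assms(3)
  have pos: "\<forall>x. mu x > 0" by (rule mu_pos[OF st irr rv])
  have P0: "0 \<le> P$x$y" for x y using st unfolding stochastic_def by blast
  define B where "B = (\<Union>i\<in>{1..k}. A i)"
  define lm where "lm = lam P k"
  have D: "2 * n \<le> gdist P a b"
    if ij: "i \<in> {1..k}" "j \<in> {1..k}" "i \<noteq> j" and ab: "a \<in> A i" "b \<in> A j" for i j a b
  proof -
    have "enat (2 * n) = 2 * enat n" by (simp add: numeral_eq_enat)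
    also have "\<dots> \<le> (INF ij\<in>{(i, j). i \<in> {1..k} \<and> j \<in> {1..k} \<and> i \<noteq> j}.
            set_dist P (A (fst ij)) (A (snd ij)))" by (rule assms(8))
    also have "\<dots> \<le> set_dist P (A i) (A j)"
      by (rule INF_lower2[of "(i, j)"]) (use ij in auto)
    also have "\<dots> \<le> enat (gdist P a b)" by (rule set_dist_le[OF ab])
    finally show ?thesis by simp
  qed
  have disjA: "A i \<inter> A j = {}" if "i \<in> {1..k}" "j \<in> {1..k}" "i \<noteq> j" for i j
  proof (rule ccontr)
    assume "A i \<inter> A j \<noteq> {}"
    then obtain a where "a \<in> A i" "a \<in> A j" by blast
    hence "2 * n \<le> gdist P a a" using D that by blast
    thus False using assms(7) gdist_refl[of P a] by simp
  qed
  have measB: "meas mu B = (\<Sum>i\<in>{1..k}. meas mu (A i))"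
    unfolding B_def meas_def by (rule sum.UNION_disjoint) (use disjA in auto)
  have Aa: "meas mu (A i) \<ge> 1 - meas mu B" if "i \<in> {1..k}" for i
  proof -
    have "1 \<le> meas mu (A i) + (\<Sum>j=1..k. meas mu (A j))"
      using assms(6) that unfolding in_Delta_def by blast
    thus ?thesis unfolding measB by linarith
  qed
  have BB: "B \<subseteq> nbhd P B m" for m
  proof
    fix x assume "x \<in> B"
    thus "x \<in> nbhd P B m" unfolding nbhd_iff using gdist_refl[of P x] by force
  qed
  have mB1: "meas mu B \<le> 1"
    using meas_compl[OF rv, of B] meas_nonneg[OF pos, of "-B"] by simp
  show ?thesis
  proof (cases "meas mu B = 1")
    case True
    have "meas mu B \<le> meas mu (nbhd P B n)" by (rule meas_mono[OF pos BB])
    thus ?thesis using True unfolding B_def by simp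
  next
    case False
    hence mBl: "meas mu B < 1" using mB1 by simp
    have Ane: "A i \<noteq> {}" if "i \<in> {1..k}" for i
      using Aa[OF that] mBl by (auto simp: meas_def)
    have lm0: "0 \<le> lm"
    proof -
      define K' where "K' i = (if i = 0 then - B else A i)" for i
      have "k + 1 \<le> dim (UNIV :: (real^'n) set)"
      proof (rule ind_family_dim[of k K'])
        fix i j assume "i \<le> k" "j \<le> k" "i \<noteq> j"
        thus "K' i \<inter> K' j = {}" unfolding K'_def B_def using disjA by (auto split: if_splits)
      next
        fix i assume "i \<le> k"
        show "K' i \<noteq> {}"
        proof (cases "i = 0")
          case True
          have "meas mu (- B) > 0" using meas_compl[OF rv, of B] mBl by simp
          thus ?thesis using True unfolding K'_def by (auto simp: meas_def)
        next
          case False thus ?thesis using Ane \<open>i \<le> k\<close> unfolding K'_def by auto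
        qed
      qed
      hence "k < length (eigen_list P) \<and> lam P k \<le> 2"
        by (intro minmax[OF st rv pos subspace_UNIV]) (auto intro: bil_le2[OF st rv])
      hence "lm \<in> set (eigen_list P)" unfolding lm_def lam_def by simp
      thus ?thesis by (rule eigen_nonneg[OF st rv pos])
    qed
    define Bm where "Bm m = nbhd P B m" for m
    define N where "N m = meas mu (- Bm m)" for m
    have N0: "0 \<le> N m" for m unfolding N_def by (rule meas_nonneg[OF pos])
    have step: "N m * (1 + lm) \<le> N (m - 1)" if m: "1 \<le> m" "m \<le> n" for m
    proof (cases "N m = 0")
      case True thus ?thesis using N0 by simp
    next
      case False
      hence Npos: "N m > 0" using N0 by (simp add: less_le)
      define K where "K i = (if i = 0 then - Bm m else nbhd P (A i) (m - 1))" for i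
      have inB: "x \<in> Bm m" if "gdist P x a \<le> m" "a \<in> A i" "i \<in> {1..k}" for x a i
        unfolding Bm_def B_def nbhd_iff using that by blast
      have sy: "gdist P x y = gdist P y x" for x y by (rule gdist_sym[OF st irr rv])
      have tri: "gdist P x z \<le> gdist P x y + gdist P y z" for x y z by (rule gdist_tri[OF irr])
      have disj: "K i \<inter> K j = {}" if "i \<le> k" "j \<le> k" "i \<noteq> j" for i j
      proof -
        have c1: "nbhd P (A i) (m - 1) \<inter> - Bm m = {}" if "i \<in> {1..k}" for i
        proof -
          { fix x assume "x \<in> nbhd P (A i) (m - 1)" "x \<in> - Bm m"
            then obtain a where "a \<in> A i" "gdist P x a \<le> m - 1" by (auto simp: nbhd_iff)
            hence "x \<in> Bm m" using inB[of x a i] that by simp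
            hence False using \<open>x \<in> - Bm m\<close> by simp }
          thus ?thesis by blast
        qed
        have c2: "nbhd P (A i) (m - 1) \<inter> nbhd P (A j) (m - 1) = {}"
          if "i \<in> {1..k}" "j \<in> {1..k}" "i \<noteq> j" for i j
        proof (rule ccontr)
          assume "nbhd P (A i) (m - 1) \<inter> nbhd P (A j) (m - 1) \<noteq> {}"
          then obtain x a b where xab: "a \<in> A i" "b \<in> A j" "gdist P x a \<le> m - 1" "gdist P x b \<le> m - 1"
            by (auto simp: nbhd_iff)
          have "gdist P a b \<le> gdist P a x + gdist P x b" by (rule tri)
          also have "\<dots> \<le> 2 * n - 1" using xab sy[of a x] m by simp
          finally show False using D[OF that xab(1,2)] assms(7) by simp
        qed
        show ?thesis
        proof (cases "i = 0")
          case True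
          hence "j \<in> {1..k}" using that by auto
          thus ?thesis using c1[of j] True that(3) unfolding K_def by auto
        next
          case False
          hence i: "i \<in> {1..k}" using that by auto
          show ?thesis
          proof (cases "j = 0")
            case True thus ?thesis using c1[OF i] False unfolding K_def by auto
          next
            case jF: False
            hence "j \<in> {1..k}" using that by auto
            thus ?thesis using c2[OF i _ that(3)] False jF unfolding K_def by auto
          qed
        qed
      qed
      have noedge: "P$x$y = 0"
        if ij: "i \<le> k" "j \<le> k" "i \<noteq> j" and xy: "x \<in> K i" "y \<in> K j" for i j x y
      proof (rule ccontr)
        assume "P$x$y \<noteq> 0"
        hence e: "P$x$y > 0" using P0[of x y] by simp
        have exy: "gdist P x y \<le> 1" by (rule gdist_edge[OF e])
        hence eyx: "gdist P y x \<le> 1" using sy by simp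
        show False
        proof (cases "i = 0")
          case True
          hence j: "j \<in> {1..k}" using ij by auto
          then obtain a where a: "a \<in> A j" "gdist P y a \<le> m - 1"
            using xy(2) unfolding K_def by (auto simp: nbhd_iff)
          have "gdist P x a \<le> gdist P x y + gdist P y a" by (rule tri)
          hence "gdist P x a \<le> m" using exy a m by simp
          hence "x \<in> Bm m" using inB a j by blast
          thus False using xy(1) True unfolding K_def by simp
        next
          case iF: False
          hence i: "i \<in> {1..k}" using ij by auto
          then obtain a where a: "a \<in> A i" "gdist P x a \<le> m - 1"
            using xy(1) iF unfolding K_def by (auto simp: nbhd_iff)
          show False
          proof (cases "j = 0")
            case True
            have "gdist P y a \<le> gdist P y x + gdist P x a" by (rule tri)
            hence "gdist P y a \<le> m" using eyx a m by simp
            hence "y \<in> Bm m" using inB a i by blast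
            thus False using xy(2) True unfolding K_def by simp
          next
            case jF: False
            hence j: "j \<in> {1..k}" using ij by auto
            then obtain b where b: "b \<in> A j" "gdist P y b \<le> m - 1"
              using xy(2) jF unfolding K_def by (auto simp: nbhd_iff)
            have "gdist P a b \<le> gdist P a x + gdist P x b" by (rule tri)
            also have "gdist P x b \<le> gdist P x y + gdist P y b" by (rule tri)
            finally have "gdist P a b \<le> 2 * n - 1" using a b exy sy[of a x] m by simp
            thus False using D[OF i j ij(3) a(1) b(1)] assms(7) by simp
          qed
        qed
      qed
      have mK: "N m \<le> meas mu (K i)" if "i \<le> k" for i
      proof (cases "i = 0")
        case True thus ?thesis unfolding K_def N_def by simp
      next
        case False
        hence i: "i \<in> {1..k}" using that by auto
        have "N m \<le> meas mu (- B)" unfolding N_def Bm_def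
          by (rule meas_mono[OF pos]) (use BB in auto)
        also have "\<dots> = 1 - meas mu B" by (rule meas_compl[OF rv])
        also have "\<dots> \<le> meas mu (A i)" by (rule Aa[OF i])
        also have "\<dots> \<le> meas mu (K i)" unfolding K_def using False
          by (intro meas_mono[OF pos]) (auto simp: nbhd_iff; metis gdist_refl le0)
        finally show ?thesis .
      qed
      have lmb: "lm \<le> meas mu (- (\<Union>i\<le>k. K i)) / N m" unfolding lm_def
        by (rule step_generic[OF st rv pos disj noedge mK Npos]) auto
      have Kset: "- (\<Union>i\<le>k. K i) = Bm m \<inter> - Bm (m - 1)"
      proof -
        have "x \<in> (\<Union>i\<le>k. K i) \<longleftrightarrow> x \<in> - Bm m \<or> x \<in> Bm (m - 1)" for x
        proof -
          have "x \<in> (\<Union>i\<le>k. K i) \<longleftrightarrow> x \<in> - Bm m \<or> (\<exists>i\<in>{1..k}. x \<in> nbhd P (A i) (m - 1))"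
            unfolding K_def by (auto split: if_splits)
          also have "(\<exists>i\<in>{1..k}. x \<in> nbhd P (A i) (m - 1)) \<longleftrightarrow> x \<in> Bm (m - 1)"
            unfolding Bm_def B_def nbhd_iff by blast
          finally show ?thesis .
        qed
        thus ?thesis by blast
      qed
      have mono: "Bm (m - 1) \<subseteq> Bm m" unfolding Bm_def
        by (auto simp: nbhd_iff) (meson diff_le_self le_trans)
      have "- Bm (m - 1) = - Bm m \<union> (Bm m \<inter> - Bm (m - 1))" using mono by blast
      hence Nsplit: "N (m - 1) = N m + meas mu (Bm m \<inter> - Bm (m - 1))"
      proof -
        have "(- Bm m) \<inter> (Bm m \<inter> - Bm (m - 1)) = {}" by blast
        hence "sum mu (- Bm m \<union> (Bm m \<inter> - Bm (m - 1))) = sum mu (- Bm m) + sum mu (Bm m \<inter> - Bm (m - 1))"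
          by (intro sum.union_disjoint) auto
        thus ?thesis unfolding N_def meas_def using \<open>- Bm (m - 1) = _\<close> by simp
      qed
      have "lm * N m \<le> meas mu (Bm m \<inter> - Bm (m - 1))"
        using lmb Npos Kset by (simp add: pos_le_divide_eq)
      thus ?thesis using Nsplit by (simp add: algebra_simps)
    qed
    have tele: "m \<le> n \<Longrightarrow> N m * (1 + lm) ^ m \<le> N 0" for m
    proof (induction m)
      case 0 thus ?case by simp
    next
      case (Suc m)
      have "N (Suc m) * (1 + lm) ^ Suc m = (N (Suc m) * (1 + lm)) * (1 + lm) ^ m" by simp
      also have "\<dots> \<le> N m * (1 + lm) ^ m"
        using step[of "Suc m"] Suc.prems lm0 by (intro mult_right_mono) auto
      also have "\<dots> \<le> N 0" using Suc by simp
      finally show ?case .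
    qed
    have "N 0 \<le> meas mu (- B)" unfolding N_def Bm_def
      by (rule meas_mono[OF pos]) (use BB in auto)
    hence "N n * (1 + lm) ^ n \<le> 1 - meas mu B" using tele[of n] meas_compl[OF rv, of B] by simp
    hence "N n \<le> (1 - meas mu B) / (1 + lm) ^ n" using lm0 by (simp add: pos_le_divide_eq)
    moreover have "meas mu (nbhd P B n) = 1 - N n" unfolding N_def Bm_def meas_compl[OF rv] by simp
    ultimately show ?thesis unfolding B_def lm_def by simp
  qed
qed

end
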